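(* Let $a\neq0$, $b>0$, $d$ be integers with $d$ not a perfect square, $\alpha=a+b^2\sqrt d$, $N_\alpha=a^2-b^4d$ not a perfect square, $\varepsilon=(t+u\sqrt d)/2$ in the ring of integers of $\mathbb{Q}(\sqrt d)$ with $t,u$ nonzero integers, and let $x\ne0$, $y>0$ be integers with $x+y^2\sqrt d=\alpha\varepsilon^2$. Let $r_1=tb^2+au\pm2by$ (for either choice of sign) and $s_1'=-u\sqrt{N_\alpha/\operatorname{core}(N_\alpha)}$. Then $\gcd\big(4b^2r_1/\operatorname{core}(r_1),\,r_1^2\big)$ divides $s_1'^2$.
   Context: For a nonzero integer $n$, $\operatorname{core}(n)$ is the unique squarefree integer with $n/\operatorname{core}(n)$ a perfect square, $\operatorname{core}(1)=1$. Note $N_\alpha/\operatorname{core}(N_\alpha)$ is a positive perfect square, so $s_1'$ is an integer. *)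

theory Defs
  imports Complex_Main "HOL-Computational_Algebra.Polynomial" "HOL-Computational_Algebra.Squarefree"
begin

definition core :: "int \<Rightarrow> int" where
  "core n = (THE c. squarefree c \<and> (\<exists>k::int. n = c * k^2))"

definition is_square :: "int \<Rightarrow> bool" where
  "is_square n \<longleftrightarrow> (\<exists>k::int. n = k^2)"

end

theory Submission
  imports Defs
begin


lemma sqf_mult_le1_k:
  fixes c p :: int
  assumes "squarefree c" "prime p"
  shows "multiplicity p c \<le> 1"
proof (rule ccontr)
  assume "\<not> ?thesis"
  hence "p ^ 2 dvd c" by (intro multiplicity_dvd') auto
  hence "p dvd 1" using assms(1) squarefreeD by blast
  thus False using assms(2) not_prime_unit by blast
qed

lemma ar1: "(e::nat) \<le> e' \<Longrightarrow> G \<le> 2*e \<Longrightarrow> e+e' = 2*U + C + 2*M \<Longrightarrow> C \<le> 1 \<Longrightarrow> G \<le> 2*U + 2*M"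
  by presburger

lemma ar2: "(G::nat) \<le> 2*B+2*K \<Longrightarrow> e = c + 2*K \<Longrightarrow> e+e' = 2*U + C + 2*M \<Longrightarrow> c \<le> 1 \<Longrightarrow> C \<le> 1
   \<Longrightarrow> B+Y \<le> e' \<Longrightarrow> B \<le> Y \<Longrightarrow> G \<le> 2*U + 2*M"
  by presburger

lemma key:
  fixes r r' u N c cN k m b y t n s :: int
  assumes r: "r = c * k^2" and sc: "squarefree c"
    and N: "N = cN * m^2" and scN: "squarefree cN"
    and rr: "r * r' = u^2 * N" and u: "u \<noteq> 0" and N0: "N \<noteq> 0"
    and r': "r' = r - s * (4 * b * y)" and s: "s * s = 1"
    and yid: "4 * y^2 = t * (r + r') - 4 * b^2 * n"
    and b: "b \<noteq> 0" and y: "y \<noteq> 0"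
  shows "gcd (4 * b^2 * k^2) (r^2) dvd u^2 * m^2"
proof (rule multiplicity_le_imp_dvd)
  have r0: "r \<noteq> 0" and r'0: "r' \<noteq> 0" using rr u N0 by auto
  hence c0: "c \<noteq> 0" and k0: "k \<noteq> 0" using r by auto
  have cN0: "cN \<noteq> 0" and m0: "m \<noteq> 0" using N N0 by auto
  show "gcd (4 * b^2 * k^2) (r^2) \<noteq> 0" using r0 by simp
  fix p :: int assume p: "prime p"
  have pe: "prime_elem p" using p by (rule prime_imp_prime_elem)
  have nu: "\<not> is_unit p" using p not_prime_unit by blast
  define v where "v = multiplicity p"
  have vmul: "v (x * z) = v x + v z" if "x \<noteq> 0" "z \<noteq> 0" for x z
    unfolding v_def by (rule prime_elem_multiplicity_mult_distrib[OF pe that])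
  have vpow: "v (x ^ j) = j * v x" if "x \<noteq> 0" for x j
    unfolding v_def by (rule prime_elem_multiplicity_power_distrib[OF pe that])
  have vge: "j \<le> v x" if "p ^ j dvd x" "x \<noteq> 0" for x j
    unfolding v_def by (rule multiplicity_geI[OF that(2) nu that(1)])
  have vdvd: "p ^ j dvd x" if "j \<le> v x" for x j
    using that unfolding v_def by (rule multiplicity_dvd')
  have vc: "v c \<le> 1" using sqf_mult_le1_k[OF sc p] by (simp add: v_def)
  have vcN: "v cN \<le> 1" using sqf_mult_le1_k[OF scN p] by (simp add: v_def)
  define e where "e = v r"
  define e' where "e' = v r'"
  have e: "e = v c + 2 * v k" unfolding e_def r using c0 k0 by (simp add: vmul vpow)
  have ee': "e + e' = 2 * v u + v cN + 2 * v m"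
  proof -
    have "e + e' = v (r * r')" unfolding e_def e'_def using r0 r'0 by (simp add: vmul)
    also have "\<dots> = 2 * v u + v cN + 2 * v m" unfolding rr N using u cN0 m0 by (simp add: vmul vpow)
    finally show ?thesis .
  qed
  define B where "B = v (2 * b)"
  define Y where "Y = v (2 * y)"
  have b2: "2 * b \<noteq> 0" and y2: "2 * y \<noteq> 0" using b y by auto
  have X: "4 * b^2 * k^2 = (2 * b)^2 * k^2" by (simp add: power_mult_distrib)
  have vX: "v (4 * b^2 * k^2) = 2 * B + 2 * v k"
  proof -
    have "v ((2*b)^2 * k^2) = v ((2*b)^2) + v (k^2)" by (rule vmul) (use b2 k0 in auto)
    also have "\<dots> = 2*B + 2*v k" unfolding B_def by (simp only: vpow[OF b2] vpow[OF k0])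
    finally show ?thesis unfolding X .
  qed
  have vY: "v (r^2) = 2 * e" unfolding e_def using r0 by (simp add: vpow)
  have vZ: "v (u^2 * m^2) = 2 * v u + 2 * v m" using u m0 by (simp add: vmul vpow)
  have g1: "v (gcd (4 * b^2 * k^2) (r^2)) \<le> v (4 * b^2 * k^2)"
    unfolding v_def by (rule dvd_imp_multiplicity_le) (use b k0 in auto)
  have g2: "v (gcd (4 * b^2 * k^2) (r^2)) \<le> v (r^2)"
    unfolding v_def by (rule dvd_imp_multiplicity_le) (use r0 in auto)
  show "multiplicity p (gcd (4 * b^2 * k^2) (r^2)) \<le> multiplicity p (u^2 * m^2)"
  proof (cases "e \<le> e'")
    case True
    have "v (gcd (4 * b^2 * k^2) (r^2)) \<le> 2 * e" using g2 vY by simp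
    from ar1[OF True this ee' vcN] show ?thesis using vZ by (simp add: v_def)
  next
    case False
    have by4: "4 * b * y = (2 * b) * (2 * y)" by simp
    have vby: "v (4 * b * y) = B + Y" unfolding by4 B_def Y_def by (rule vmul[OF b2 y2])
    have s1: "B + Y \<le> e'"
    proof (rule ccontr)
      assume "\<not> ?thesis"
      hence "p ^ (e' + 1) dvd 4 * b * y" using vby by (intro vdvd) simp
      moreover have "p ^ (e' + 1) dvd r" using False unfolding e_def by (intro vdvd) simp
      ultimately have "p ^ (e' + 1) dvd r - s * (4 * b * y)" by (metis dvd_diff dvd_mult)
      hence "p ^ (e' + 1) dvd r'" using r' by simp
      hence "e' + 1 \<le> v r'" using r'0 by (intro vge)
      thus False unfolding e'_def by simp
    qed
    have s2: "B \<le> Y"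
    proof (rule ccontr)
      assume YB: "\<not> ?thesis"
      have "p ^ (B + Y) dvd r" using s1 False unfolding e_def by (intro vdvd) simp
      moreover have "p ^ (B + Y) dvd r'" using s1 unfolding e'_def by (intro vdvd) simp
      ultimately have "p ^ (B + Y) dvd r + r'" by (rule dvd_add)
      moreover have "p ^ (2 * Y + 1) dvd p ^ (B + Y)" using YB by (intro le_imp_power_dvd) simp
      ultimately have "p ^ (2 * Y + 1) dvd r + r'" using dvd_trans by blast
      hence d1: "p ^ (2 * Y + 1) dvd t * (r + r')" by (rule dvd_mult)
      have "p ^ (2 * B) dvd (2 * b)^2" unfolding B_def by (intro vdvd) (simp only: vpow[OF b2] le_refl)
      moreover have "p ^ (2 * Y + 1) dvd p ^ (2 * B)" using YB by (intro le_imp_power_dvd) simp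
      ultimately have "p ^ (2 * Y + 1) dvd (2 * b)^2" using dvd_trans by blast
      hence "p ^ (2 * Y + 1) dvd (2 * b)^2 * n" by (rule dvd_mult2)
      moreover have "(2 * b)^2 * n = 4 * b^2 * n" by (simp add: power_mult_distrib)
      ultimately have d2: "p ^ (2 * Y + 1) dvd 4 * b^2 * n" by simp
      have yy: "(2 * y)^2 = t * (r + r') - 4 * b^2 * n" using yid by (simp add: power_mult_distrib)
      have "p ^ (2 * Y + 1) dvd t * (r + r') - 4 * b^2 * n" using d1 d2 by (rule dvd_diff)
      hence "p ^ (2 * Y + 1) dvd (2 * y)^2" by (simp only: yy)
      hence "2 * Y + 1 \<le> v ((2*y)^2)" using y2 by (intro vge) auto
      thus False unfolding Y_def vpow[OF y2] by simp
    qed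
    show ?thesis using ar2[OF _ e ee' vc vcN s1 s2, of "v (gcd (4 * b^2 * k^2) (r^2))"] g1 vX vZ by (simp add: v_def)
  qed
qed


lemma mp_add: "map_poly (of_int :: int \<Rightarrow> 'a::comm_ring_1) (p + q) = map_poly of_int p + map_poly of_int q"
  by (intro poly_eqI) (simp add: coeff_map_poly)

lemma mp_smult: "map_poly (of_int :: int \<Rightarrow> 'a::comm_ring_1) (smult c p) = smult (of_int c) (map_poly of_int p)"
  by (rule map_poly_smult) simp_all

lemma mp_mult: "map_poly (of_int :: int \<Rightarrow> 'a::comm_ring_1) (p * q) = map_poly of_int p * map_poly of_int q"
  by (induction p) (simp_all add: map_poly_pCons mp_add mp_smult)

lemma irr:
  fixes L K d :: int
  assumes nsq: "\<not> is_square d" and eq: "of_int L + of_int K * csqrt (of_int d) = (0::complex)"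
  shows "K = 0"
proof (rule ccontr)
  assume K: "K \<noteq> 0"
  have "csqrt (of_int d) = - of_int L / of_int K" using eq K by (simp add: field_simps add_eq_0_iff)
  hence "(csqrt (of_int d))^2 = (- of_int L / of_int K)^2" by simp
  hence "(of_int d :: complex) = of_int L ^ 2 / of_int K ^ 2" by (simp add: power_divide)
  hence "(of_int (d * K^2) :: complex) = of_int (L^2)" using K by (simp add: field_simps)
  hence dk: "d * K^2 = L^2" by (simp only: of_int_eq_iff)
  hence "K^2 dvd L^2" by (metis dvd_triv_right)
  hence "K dvd L" by simp
  then obtain m where m: "L = K * m" by blast
  have "d * K^2 = m^2 * K^2" using dk m by (simp add: power_mult_distrib)
  hence "d = m^2" using K by simp
  thus False using nsq unfolding is_square_def by blast
qed

lemma alg_int_mod4: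
  fixes t u d :: int
  assumes nsq: "\<not> is_square d" and u: "u \<noteq> 0"
    and ai: "algebraic_int ((of_int t + of_int u * csqrt (of_int d)) / 2 :: complex)"
  shows "4 dvd t^2 - u^2 * d"
proof -
  define z :: complex where "z = (of_int t + of_int u * csqrt (of_int d)) / 2"
  obtain P :: "int poly" where P: "poly (map_poly of_int P) z = 0" "lead_coeff P = 1"
    using ai unfolding z_def algebraic_int_altdef_ipoly by blast
  define Q :: "int poly" where "Q = [:t^2 - u^2 * d, -4 * t, 4:]"
  have Q0: "Q \<noteq> 0" by (simp add: Q_def)
  have dQ: "degree Q = 2" by (simp add: Q_def)
  have lQ: "lead_coeff Q = 4" by (simp add: Q_def)
  obtain D R where DR: "pseudo_divmod P Q = (D, R)" by fastforce
  have eq1: "smult (4 ^ (Suc (degree P) - 2)) P = Q * D + R"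
    using pseudo_divmod(1)[OF Q0 DR] dQ lQ by simp
  have degR: "R = 0 \<or> degree R < 2" using pseudo_divmod(2)[OF Q0 DR] dQ by simp
  have s2: "(csqrt (of_int d :: complex))^2 = of_int d" by simp
  have Qz: "poly (map_poly of_int Q) z = 0"
  proof -
    define s where "s = csqrt (of_int d :: complex)"
    have ss: "s^2 = of_int d" unfolding s_def by simp
    have z2: "2*z = of_int t + of_int u * s" unfolding z_def s_def by simp
    have "poly (map_poly of_int Q) z = of_int (t^2 - u^2*d) + z * (of_int (-4*t) + z * 4)"
      unfolding Q_def by (simp add: map_poly_pCons)
    also have "\<dots> = (2*z - of_int t)^2 - (of_int u)^2 * of_int d"
      by (simp add: algebra_simps power2_eq_square)
    also have "\<dots> = (of_int u * s)^2 - (of_int u)^2 * of_int d" using z2 by simp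
    also have "\<dots> = 0" using ss by (simp add: power_mult_distrib)
    finally show ?thesis .
  qed
  have "poly (map_poly of_int (Q * D + R)) z = 0"
    using P(1) by (simp flip: eq1 add: mp_smult)
  hence Rz: "poly (map_poly of_int R) z = 0" using Qz by (simp add: mp_add mp_mult)
  have R: "R = [:coeff R 0, coeff R 1:]"
  proof -
    have "degree R \<le> 1" using degR by auto
    thus ?thesis by (intro poly_eqI) (auto simp: coeff_pCons split: nat.splits intro!: coeff_eq_0)
  qed
  have "of_int (coeff R 0) + of_int (coeff R 1) * z = 0" using Rz by (subst (asm) R) (simp add: map_poly_pCons algebra_simps)
  hence "of_int (2 * coeff R 0 + coeff R 1 * t) + of_int (coeff R 1 * u) * csqrt (of_int d) = (0::complex)"
    unfolding z_def by (simp add: field_simps)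
  hence "coeff R 1 * u = 0" by (rule irr[OF nsq])
  hence r1: "coeff R 1 = 0" using u by simp
  hence "of_int (2 * coeff R 0 + coeff R 1 * t) + of_int 0 * csqrt (of_int d) = (0::complex)"
    using \<open>of_int (2 * coeff R 0 + coeff R 1 * t) + _ = 0\<close> by simp
  hence "coeff R 0 = 0" using r1 by simp
  with r1 have R0: "R = 0" by (subst R) simp
  define e where "e = Suc (degree P) - 2"
  have eq2: "Q * D = smult (4 ^ e) P" using eq1 R0 e_def by simp
  have cP: "content P = 1"
  proof -
    have "content P dvd 1" using content_dvd_coeff[of P "degree P"] P(2) by simp
    thus ?thesis by (metis normalize_content is_unit_normalize normalize_1 )
  qed
  have c: "content Q * content D = 4 ^ e"
    using arg_cong[OF eq2, of content] by (simp add: content_mult cP)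
  have l: "4 * lead_coeff D = 4 ^ e"
    using arg_cong[OF eq2, of lead_coeff] by (simp add: lead_coeff_mult lQ lead_coeff_smult P(2))
  have D0: "D \<noteq> 0" using l by auto
  obtain j where j: "lead_coeff D = content D * j" using content_dvd_coeff[of D "degree D"] by blast
  have "content Q * content D = 4 * j * content D" using c l j by (simp add: algebra_simps)
  moreover have "content D \<noteq> 0" using D0 by simp
  ultimately have "content Q = 4 * j" by simp
  hence "4 dvd content Q" by simp
  also have "content Q dvd coeff Q 0" by simp
  finally show ?thesis by (simp add: Q_def)
qed


lemma ar0: "(a::nat) \<le> 1 \<Longrightarrow> c \<le> 1 \<Longrightarrow> a + 2*b = c + 2*d \<Longrightarrow> a = c" by presburger

lemma sqf_mult_le1:
  fixes c p :: int
  assumes "squarefree c" "prime p"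
  shows "multiplicity p c \<le> 1"
proof (rule ccontr)
  assume "\<not> ?thesis"
  hence "p ^ 2 dvd c" by (intro multiplicity_dvd') auto
  hence "p dvd 1" using assms(1) squarefreeD by blast
  thus False using assms(2) not_prime_unit by blast
qed

lemma core_uniq:
  fixes c1 c2 k1 k2 :: int
  assumes s1: "squarefree c1" and s2: "squarefree c2" and eq: "c1 * k1^2 = c2 * k2^2"
    and nz: "c1 * k1^2 \<noteq> 0"
  shows "c1 = c2"
proof -
  have c1: "c1 \<noteq> 0" "k1 \<noteq> 0" and c2: "c2 \<noteq> 0" "k2 \<noteq> 0" using nz eq by auto
  have "normalize c1 = normalize c2"
  proof (rule multiplicity_eq_imp_eq[OF c1(1) c2(1)])
    fix p :: int assume p: "prime p"
    have pe: "prime_elem p" using p by (rule prime_imp_prime_elem)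
    have "multiplicity p (c1 * k1^2) = multiplicity p (c2 * k2^2)" using eq by simp
    hence "multiplicity p c1 + 2 * multiplicity p k1 = multiplicity p c2 + 2 * multiplicity p k2"
      using c1 c2 by (simp add: prime_elem_multiplicity_mult_distrib[OF pe] prime_elem_multiplicity_power_distrib[OF pe])
    thus "multiplicity p c1 = multiplicity p c2"
      using ar0 sqf_mult_le1[OF s1 p] sqf_mult_le1[OF s2 p] by blast
  qed
  hence "\<bar>c1\<bar> = \<bar>c2\<bar>" by simp
  moreover have "c1 \<noteq> - c2"
  proof
    assume "c1 = - c2"
    hence "c2 * (k1^2 + k2^2) = 0" using eq by (simp add: algebra_simps)
    moreover have "k1^2 + k2^2 > 0" using c1(2) by (simp add: add_pos_nonneg)
    ultimately show False using c2 by simp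
  qed
  ultimately show ?thesis by arith
qed

lemma core_prop:
  fixes n :: int
  assumes "n \<noteq> 0"
  shows "squarefree (core n) \<and> (\<exists>k. n = core n * k^2)"
proof -
  have ex: "squarefree (squarefree_part n) \<and> (\<exists>k. n = squarefree_part n * k^2)"
    using squarefree_decompose[of n] by auto
  have "\<exists>!c. squarefree c \<and> (\<exists>k::int. n = c * k^2)"
  proof (rule ex_ex1I)
    show "\<exists>c. squarefree c \<and> (\<exists>k::int. n = c * k^2)" using ex by blast
  next
    fix c1 c2 assume "squarefree c1 \<and> (\<exists>k::int. n = c1 * k^2)" "squarefree c2 \<and> (\<exists>k::int. n = c2 * k^2)"
    then obtain k1 k2 where "squarefree c1" "squarefree c2" "n = c1 * k1^2" "n = c2 * k2^2" by blast
    thus "c1 = c2" using core_uniq assms by metis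
  qed
  thus ?thesis unfolding core_def by (rule theI')
qed


theorem lemma3p2:
  fixes a b d t u x y \<sigma> :: int
  assumes "a \<noteq> 0" and "b > 0"
    and "\<not> is_square d"
    and "\<not> is_square (a^2 - b^4 * d)"
    and "t \<noteq> 0" and "u \<noteq> 0"
    and "algebraic_int ((of_int t + of_int u * csqrt (of_int d)) / 2 :: complex)"
    and "x \<noteq> 0" and "y > 0"
    and "of_int x + of_int (y^2) * csqrt (of_int d) =
           (of_int a + of_int (b^2) * csqrt (of_int d)) *
           ((of_int t + of_int u * csqrt (of_int d)) / 2) ^ 2"
    and "\<sigma> \<in> {1, -1}"
  shows "let N = a^2 - b^4 * d;
             r1 = t * b^2 + a * u + \<sigma> * 2 * b * y;
             s1' = - u * \<lfloor>sqrt (real_of_int (N div core N))\<rfloor>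
         in gcd (4 * b^2 * r1 div core r1) (r1^2) dvd s1'^2"
proof -
  note A = assms
  define N where "N = a^2 - b^4 * d"
  define r1 where "r1 = t * b^2 + a * u + \<sigma> * 2 * b * y"
  define r1' where "r1' = r1 - \<sigma> * (4 * b * y)"
  have ss: "\<sigma> * \<sigma> = 1" using A(11) by auto
  have N0: "N \<noteq> 0" using A(4) unfolding N_def is_square_def by (metis power_zero_numeral)
  define s where "s = csqrt (of_int d :: complex)"
  have s2: "s^2 = of_int d" unfolding s_def by simp
  define AA where "AA = a * (t^2 + u^2 * d) + 2 * t * u * b^2 * d"
  define BB where "BB = 2 * a * t * u + b^2 * (t^2 + u^2 * d)"
  have "(of_int a + of_int (b^2) * s) * ((of_int t + of_int u * s) / 2) ^ 2 * 4
        = (of_int a + of_int (b^2) * s) * (of_int t + of_int u * s) ^ 2"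
    by (simp add: power_divide)
  also have "\<dots> = of_int AA + of_int BB * s + (s^2 - of_int d) * (of_int a * of_int u ^ 2
        + 2 * of_int t * of_int u * of_int b ^ 2 + of_int b ^ 2 * of_int u ^ 2 * s)"
    unfolding AA_def BB_def by (simp add: algebra_simps power2_eq_square power3_eq_cube)
  also have "\<dots> = of_int AA + of_int BB * s" using s2 by simp
  finally have H: "(of_int a + of_int (b^2) * s) * ((of_int t + of_int u * s) / 2) ^ 2 * 4 = of_int AA + of_int BB * s" .
  have "of_int (4 * x) + of_int (4 * y^2) * s = (of_int x + of_int (y^2) * s) * 4" by (simp add: algebra_simps)
  also have "\<dots> = (of_int a + of_int (b^2) * s) * ((of_int t + of_int u * s) / 2) ^ 2 * 4"
    using A(10) unfolding s_def by simp
  finally have "of_int (4 * x) + of_int (4 * y^2) * s = of_int AA + of_int BB * s" using H by simp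
  hence "of_int (4 * x - AA) + of_int (4 * y^2 - BB) * csqrt (of_int d) = (0::complex)"
    unfolding s_def by (simp add: algebra_simps)
  hence "4 * y^2 - BB = 0" by (rule irr[OF A(3)])
  hence E: "4 * y^2 = 2 * a * t * u + b^2 * (t^2 + u^2 * d)" unfolding BB_def by simp
  obtain n where n: "t^2 - u^2 * d = 4 * n" using alg_int_mod4[OF A(3) A(6) A(7)] by blast
  have rr: "r1 * r1' = u^2 * N"
  proof -
    have "r1 * r1' = (t * b^2 + a * u)^2 - (\<sigma> * \<sigma>) * b^2 * (4 * y^2)"
      unfolding r1'_def r1_def by algebra
    also have "\<dots> = u^2 * N" unfolding ss E N_def by algebra
    finally show ?thesis .
  qed
  have yid: "4 * y^2 = t * (r1 + r1') - 4 * b^2 * n"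
    unfolding r1'_def r1_def using E n by algebra
  have r0: "r1 \<noteq> 0" using rr A(6) N0 by auto
  obtain k where sc: "squarefree (core r1)" and k: "r1 = core r1 * k^2" using core_prop[OF r0] by blast
  obtain m where scN: "squarefree (core N)" and m: "N = core N * m^2" using core_prop[OF N0] by blast
  have c0: "core r1 \<noteq> 0" and cN0: "core N \<noteq> 0" using r0 N0 k m by auto
  have G: "gcd (4 * b^2 * k^2) (r1^2) dvd u^2 * m^2"
    by (rule key[OF k sc m scN rr A(6) N0 r1'_def ss yid]) (use A(2) A(9) in auto)
  have X: "4 * b^2 * r1 div core r1 = 4 * b^2 * k^2"
  proof -
    have "4 * b^2 * r1 = core r1 * (4 * b^2 * k^2)" by (subst k) (simp add: algebra_simps)
    hence "4 * b^2 * r1 div core r1 = core r1 * (4 * b^2 * k^2) div core r1" by (simp only:)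
    thus ?thesis using c0 by (metis nonzero_mult_div_cancel_left)
  qed
  have Nd: "N div core N = m^2" using cN0 by (subst m) simp
  have Fl: "\<lfloor>sqrt (real_of_int (N div core N))\<rfloor> = \<bar>m\<bar>"
    unfolding Nd by (simp flip: of_int_abs)
  have Z: "(- u * \<bar>m\<bar>)^2 = u^2 * m^2" by (simp add: power_mult_distrib)
  show ?thesis unfolding Let_def N_def[symmetric] r1_def[symmetric] X Fl Z using G .
qed

end
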